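(* Let $\mathcal{L}$ be a distributive abstract logic. For all $a,b\in Expr_{\mathcal{L}}$, $a\le b$ if and only if $a\Vdash_{\mathcal{L}} b$.
   Context: An abstract logic is a triple $\mathcal{L}=(Expr_{\mathcal{L}},Th_{\mathcal{L}},\mathcal{C}_{\mathcal{L}})$ where $Expr_{\mathcal{L}}$ is a set, $Th_{\mathcal{L}}$ a non-empty set of subsets of $Expr_{\mathcal{L}}$ (theories) closed under intersections of non-empty subfamilies, and $\mathcal{C}_{\mathcal{L}}$ a set of operations on $Expr_{\mathcal{L}}$. $\mathcal{L}$ is closed under union of chains if the union of every non-empty chain of theories is a theory. A theory $T$ is prime if $T=\bigcap\mathcal{T}$ with $\mathcal{T}\subseteq Th_{\mathcal{L}}$ non-empty finite implies $T\in\mathcal{T}$; totally prime if this holds for non-empty $\mathcal{T}$ of any size. $PTh_{\mathcal{L}}$, $TPTh_{\mathcal{L}}$ denote these sets. A distributive abstract logic is one closed under union of chains with binary connectives $\vee,\wedge$ such that for all $a,b$ and all $T\in TPTh_{\mathcal{L}}$: $a\vee b\in T$ iff $a\in T$ or $b\in T$; $a\wedge b\in T$ iff $a,b\in T$. $b\Vdash_{\mathcal{L}}a$ means $a$ belongs to every theory containing $b$. The order: $a\le b$ iff $S_a\subseteq S_b$, where $S_a=\{P\in PTh_{\mathcal{L}}: a\in P\}$. *)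

theory Defs
  imports Main
begin

text \<open>The set of operations C is left implicit;
the connectives of a distributive logic are given as binary operations on E.\<close>

definition abstract_logic :: "'a set \<Rightarrow> 'a set set \<Rightarrow> bool" where
  "abstract_logic E Th \<longleftrightarrow> Th \<noteq> {} \<and> (\<forall>T\<in>Th. T \<subseteq> E) \<and>
     (\<forall>\<T>. \<T> \<subseteq> Th \<and> \<T> \<noteq> {} \<longrightarrow> \<Inter>\<T> \<in> Th)"

definition closed_union_chains :: "'a set set \<Rightarrow> bool" where
  "closed_union_chains Th \<longleftrightarrow>
     (\<forall>\<C>. \<C> \<subseteq> Th \<and> \<C> \<noteq> {} \<and> Complete_Partial_Order.chain (\<subseteq>) \<C> \<longrightarrow> \<Union>\<C> \<in> Th)"

definition prime_theories :: "'a set set \<Rightarrow> 'a set set" where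
  "prime_theories Th = {T \<in> Th. \<forall>\<T>. \<T> \<subseteq> Th \<and> \<T> \<noteq> {} \<and> finite \<T> \<and> T = \<Inter>\<T> \<longrightarrow> T \<in> \<T>}"

definition totally_prime_theories :: "'a set set \<Rightarrow> 'a set set" where
  "totally_prime_theories Th = {T \<in> Th. \<forall>\<T>. \<T> \<subseteq> Th \<and> \<T> \<noteq> {} \<and> T = \<Inter>\<T> \<longrightarrow> T \<in> \<T>}"

definition distributive_logic ::
  "'a set \<Rightarrow> 'a set set \<Rightarrow> ('a \<Rightarrow> 'a \<Rightarrow> 'a) \<Rightarrow> ('a \<Rightarrow> 'a \<Rightarrow> 'a) \<Rightarrow> bool" where
  "distributive_logic E Th vee wedge \<longleftrightarrow>
     abstract_logic E Th \<and> closed_union_chains Th \<and>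
     (\<forall>a\<in>E. \<forall>b\<in>E. vee a b \<in> E \<and> wedge a b \<in> E) \<and>
     (\<forall>a\<in>E. \<forall>b\<in>E. \<forall>T\<in>totally_prime_theories Th.
        (vee a b \<in> T \<longleftrightarrow> a \<in> T \<or> b \<in> T) \<and> (wedge a b \<in> T \<longleftrightarrow> a \<in> T \<and> b \<in> T))"

definition entails :: "'a set set \<Rightarrow> 'a \<Rightarrow> 'a \<Rightarrow> bool" where
  "entails Th b a \<longleftrightarrow> (\<forall>T\<in>Th. b \<in> T \<longrightarrow> a \<in> T)"

definition S_set :: "'a set set \<Rightarrow> 'a \<Rightarrow> 'a set set" where
  "S_set Th a = {P \<in> prime_theories Th. a \<in> P}"

definition logic_le :: "'a set set \<Rightarrow> 'a \<Rightarrow> 'a \<Rightarrow> bool" where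
  "logic_le Th a b \<longleftrightarrow> S_set Th a \<subseteq> S_set Th b"

end

theory Submission
  imports Defs
begin

theorem corollary3p11:
  assumes "distributive_logic E Th vee wedge"
    and "a \<in> E" and "b \<in> E"
  shows "logic_le Th a b \<longleftrightarrow> entails Th a b"
proof
  assume "entails Th a b"
  then show "logic_le Th a b"
    unfolding logic_le_def S_set_def entails_def prime_theories_def by blast
next
  assume le: "logic_le Th a b"
  have cu: "closed_union_chains Th" using assms(1) unfolding distributive_logic_def by blast
  show "entails Th a b"
    unfolding entails_def
  proof (intro ballI impI, rule ccontr)
    fix T assume T: "T \<in> Th" "a \<in> T" "b \<notin> T"
    define A where "A = {X \<in> Th. T \<subseteq> X \<and> b \<notin> X}"
    have "\<forall>C\<in>chains A. \<exists>U\<in>A. \<forall>X\<in>C. X \<subseteq> U"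
    proof
      fix C assume C: "C \<in> chains A"
      show "\<exists>U\<in>A. \<forall>X\<in>C. X \<subseteq> U"
      proof (cases "C = {}")
        case True then show ?thesis using T unfolding A_def by auto
      next
        case False
        have "C \<subseteq> Th" "Complete_Partial_Order.chain (\<subseteq>) C"
          using C unfolding chains_def chain_subset_def A_def Complete_Partial_Order.chain_def
          by auto
        then have "\<Union>C \<in> Th" using cu False unfolding closed_union_chains_def by blast
        moreover have "T \<subseteq> \<Union>C" "b \<notin> \<Union>C" using C False unfolding chains_def A_def by auto
        ultimately show ?thesis unfolding A_def by blast
      qed
    qed
    then obtain M where M: "M \<in> A" "\<forall>X\<in>A. M \<subseteq> X \<longrightarrow> X = M"
      using Zorn_Lemma2 by blast
    have "M \<in> prime_theories Th"
      unfolding prime_theories_def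
    proof (intro CollectI conjI allI impI)
      show "M \<in> Th" using M unfolding A_def by auto
      fix \<T> assume H: "\<T> \<subseteq> Th \<and> \<T> \<noteq> {} \<and> finite \<T> \<and> M = \<Inter>\<T>"
      have "b \<notin> M" using M unfolding A_def by auto
      then obtain T' where "T' \<in> \<T>" "b \<notin> T'" using H by auto
      moreover have "M \<subseteq> T'" using H \<open>T' \<in> \<T>\<close> by auto
      moreover have "T \<subseteq> M" using M unfolding A_def by auto
      ultimately have "T' \<in> A" using H unfolding A_def by auto
      then have "T' = M" using M \<open>M \<subseteq> T'\<close> by blast
      then show "M \<in> \<T>" using \<open>T' \<in> \<T>\<close> by simp
    qed
    moreover have "a \<in> M" "b \<notin> M" using M T unfolding A_def by auto
    ultimately show False using le unfolding logic_le_def S_set_def by blast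
  qed
qed

end
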